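(* Let $m,n,d,e,k$ be positive integers with $m=2n$, $e=\gcd(n,d)=\gcd(m,d)$ and $1\le k\le \frac{n}{e}$, and let $C$ be the binary code described in the context. If $c\in C$ is nonzero, then \[{\rm DC}(c)\in\{-1\}\cup\{-1\pm 2^{\frac{m}{2}+je}\mid j=0,1,\dots,k-1\}.\]
   Context: For $\vec a=(a_0,a_1,\dots,a_k)\in\mathbb{F}_{2^n}\times\mathbb{F}_{2^m}^k$ define $Q_{\vec a}:\mathbb{F}_{2^m}\to\mathbb{F}_{2^e}$ by \[Q_{\vec a}(x)={\rm Tr}_{\mathbb{F}_{2^n}/\mathbb{F}_{2^e}}\big(a_0x^{2^{nd/e}+1}\big)+\sum_{j=1}^{k-1}{\rm Tr}_{\mathbb{F}_{2^m}/\mathbb{F}_{2^e}}\big(a_jx^{2^{(\frac{n}{e}-j)d}+1}\big)+{\rm Tr}_{\mathbb{F}_{2^m}/\mathbb{F}_{2^e}}(a_kx).\] Here $x^{2^{nd/e}+1}\in\mathbb{F}_{2^n}$ for $x\in\mathbb{F}_{2^m}$. Let $\pi$ be a primitive element of $\mathbb{F}_{2^m}$. For each $\vec a$, let $c_{\vec a}=(c_{\vec a,0},\dots,c_{\vec a,2^m-2})\in\mathbb{F}_2^{2^m-1}$ with $c_{\vec a,i}={\rm Tr}_{\mathbb{F}_{2^e}/\mathbb{F}_2}(Q_{\vec a}(\pi^{-i}))$. Then $C=\{c_{\vec a}\mid \vec a\in\mathbb{F}_{2^n}\times\mathbb{F}_{2^m}^k\}$. Equivalently, $C$ is the $\mathbb{F}_2$-span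 of all cyclic shifts of an m-sequence $s$ of length $2^m-1$ and of its decimations by $2^{(\frac{n}{e}-j)d}+1$, $0\le j<k$. For $c=(c_0,\dots,c_{2^m-2})\in C$, the DC component is ${\rm DC}(c)=\sum_{i=0}^{2^m-2}(-1)^{c_i}$. *)

theory Defs
  imports Main
begin

text \<open>The field F_{2^m} is modelled by a finite field type 'a with CARD('a) = 2^m.
  For s dividing t, the relative trace Tr_{F_{2^t}/F_{2^s}}(x) = sum_{i < t/s} x^(2^(s*i)).\<close>
definition trace :: "nat \<Rightarrow> nat \<Rightarrow> 'a::field \<Rightarrow> 'a" where
  "trace t s x = (\<Sum>i<t div s. x ^ (2 ^ (s * i)))"

definition primitive_elem :: "'a::field \<Rightarrow> bool" where
  "primitive_elem \<pi> \<longleftrightarrow> \<pi> \<noteq> 0 \<and> (\<forall>y. y \<noteq> 0 \<longrightarrow> (\<exists>i::nat. y = \<pi> ^ i))"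

definition Qf :: "nat \<Rightarrow> nat \<Rightarrow> nat \<Rightarrow> nat \<Rightarrow> nat \<Rightarrow> 'a::field \<Rightarrow> (nat \<Rightarrow> 'a) \<Rightarrow> 'a \<Rightarrow> 'a" where
  "Qf m n d e k a0 a x =
     trace n e (a0 * x ^ (2 ^ (n * d div e) + 1))
   + (\<Sum>j\<in>{1..<k}. trace m e (a j * x ^ (2 ^ ((n div e - j) * d) + 1)))
   + trace m e (a k * x)"

text \<open>Codeword c_a as a list of bits (True = 1) of length 2^m - 1.\<close>
definition codeword :: "nat \<Rightarrow> nat \<Rightarrow> nat \<Rightarrow> nat \<Rightarrow> nat \<Rightarrow> 'a::field \<Rightarrow> 'a \<Rightarrow> (nat \<Rightarrow> 'a) \<Rightarrow> bool list" where
  "codeword m n d e k \<pi> a0 a =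
     map (\<lambda>i. trace e 1 (Qf m n d e k a0 a (inverse \<pi> ^ i)) = 1) [0..<2 ^ m - 1]"

text \<open>The code C: a0 ranges over F_{2^n} = {x. x^(2^n) = x}, a 1..a k over F_{2^m}.\<close>
definition code :: "nat \<Rightarrow> nat \<Rightarrow> nat \<Rightarrow> nat \<Rightarrow> nat \<Rightarrow> 'a::field \<Rightarrow> bool list set" where
  "code m n d e k \<pi> = {codeword m n d e k \<pi> a0 a | a0 a. a0 ^ (2 ^ n) = a0}"

definition DC :: "bool list \<Rightarrow> int" where
  "DC c = (\<Sum>b\<leftarrow>c. if b then -1 else 1)"

end

theory Submission
  imports Defs "HOL-Computational_Algebra.Polynomial"
begin

lemma of_nat_card_zero: "(of_nat (card (UNIV::'a::{finite,comm_ring_1} set)) :: 'a) = 0"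
proof -
  have "(\<Sum>x\<in>UNIV. x + 1) = (\<Sum>x\<in>UNIV. (x::'a))"
    by (rule sum.reindex_bij_betw) (auto simp: bij_betw_def inj_on_def image_def intro: exI[of _ "x - 1" for x])
  then show ?thesis by (simp add: sum.distrib)
qed

definition frob :: "nat \<Rightarrow> 'a::field \<Rightarrow> 'a" where "frob s x = x ^ (2 ^ s)"

lemma frob_0[simp]: "frob 0 x = x" by (simp add: frob_def)
lemma frob_zero[simp]: "frob s 0 = 0" by (simp add: frob_def)
lemma frob_one[simp]: "frob s 1 = 1" by (simp add: frob_def)
lemma frob_mult: "frob s (x * y) = frob s x * frob s y" by (simp add: frob_def power_mult_distrib)
lemma frob_add_exp: "frob (s + t) x = frob s (frob t x)"
  by (simp add: frob_def power_add power_mult[symmetric] mult.commute)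
lemma frob_eq_0_iff[simp]: "frob s x = 0 \<longleftrightarrow> x = 0" by (simp add: frob_def)
lemma frob_inverse: "frob s (inverse x) = inverse (frob s x)" by (simp add: frob_def power_inverse)

context
  fixes m :: nat
  assumes card: "card (UNIV::'a::{field,finite} set) = 2 ^ m" and mpos: "0 < m"
begin

lemma two_zero: "(2::'a) = 0"
proof -
  have "(of_nat (2^m) :: 'a) = 0" using of_nat_card_zero[where 'a='a] card by simp
  then have "(2::'a)^m = 0" by simp
  then show ?thesis by simp
qed

lemma add_self[simp]: "(x::'a) + x = 0"
proof -
  have "x + x = 2 * x" by simp
  then show ?thesis using two_zero by simp
qed

lemma minus_eq: "- (x::'a) = x"
  using add_self[of x] by (metis add.inverse_unique)

lemma diff_eq_add: "(x::'a) - y = x + y"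
  by (simp add: minus_eq[of y])

lemma fermat: "(x::'a) ^ (2^m) = x"
proof (cases "x = 0")
  case True then show ?thesis using mpos by simp
next
  case False
  let ?A = "UNIV - {0::'a}"
  have "(\<Prod>y\<in>?A. x * y) = (\<Prod>y\<in>?A. y)"
    proof (rule prod.reindex_bij_betw)
    show "bij_betw ((*) x) ?A ?A" unfolding bij_betw_def inj_on_def image_def
      using False by auto (metis DiffI UNIV_I divide_eq_0_iff mult.commute nonzero_eq_divide_eq singletonD)
  qed
  moreover have "(\<Prod>y\<in>?A. x * y) = x ^ card ?A * (\<Prod>y\<in>?A. y)" by (simp add: prod.distrib)
  moreover have "(\<Prod>y\<in>?A. y) \<noteq> 0" by simp
  ultimately have "x ^ card ?A = 1" by simp
  moreover have "card ?A = 2^m - 1" using card by (simp add: card_Diff_singleton)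
  ultimately have "x ^ (2^m - 1) = 1" by simp
  then have "x ^ (2^m - 1) * x = x" by simp
  then show ?thesis by (metis power_Suc2 Suc_pred' zero_less_numeral zero_less_power)
qed

lemma frob_m[simp]: "frob m (x::'a) = x" by (simp add: frob_def fermat)

lemma frob_mult_m: "frob (m * t) (x::'a) = x"
  by (induction t) (simp_all add: frob_add_exp)

lemma frob_mod: "frob (s mod m) (x::'a) = frob s x"
proof -
  have "frob s x = frob (s mod m + m * (s div m)) x" by simp
  also have "\<dots> = frob (s mod m) x" by (subst frob_add_exp) (simp add: frob_mult_m)
  finally show ?thesis by simp
qed

lemma frob_cong: "s mod m = t mod m \<Longrightarrow> frob s (x::'a) = frob t x"
  by (metis frob_mod)

lemma frob_add: "frob s ((x::'a) + y) = frob s x + frob s y"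
proof (induction s)
  case 0 then show ?case by simp
next
  case (Suc s)
  have "frob (Suc s) z = (frob s z)^2" for z::'a by (simp add: frob_def power_mult[symmetric] mult.commute)
  then show ?case using Suc two_zero by (simp add: power2_sum)
qed

lemma frob_sum: "frob s (\<Sum>i\<in>I. f i :: 'a) = (\<Sum>i\<in>I. frob s (f i))"
  by (induction I rule: infinite_finite_induct) (simp_all add: frob_add)

end

lemma roots_bound:
  fixes S :: "nat set"
  assumes "finite S" "S \<noteq> {}"
  shows "card {x::'a::field. (\<Sum>t\<in>S. x^t) = 0} \<le> Max S"
proof -
  define p :: "'a poly" where "p = (\<Sum>t\<in>S. monom 1 t)"
  have ev: "poly p x = (\<Sum>t\<in>S. x^t)" for x by (simp add: p_def poly_sum poly_monom)
  have "coeff p (Max S) = (\<Sum>t\<in>S. if t = Max S then 1 else 0)" by (simp add: p_def coeff_sum)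
  also have "\<dots> = 1" using assms by (simp add: sum.delta)
  finally have "p \<noteq> 0" by auto
  have "degree p \<le> Max S" unfolding p_def
    by (rule degree_sum_le) (use assms in \<open>auto simp: degree_monom_eq\<close>)
  moreover have "card {x. poly p x = 0} \<le> degree p" using card_poly_roots_bound[OF \<open>p \<noteq> 0\<close>] .
  ultimately show ?thesis by (simp add: ev)
qed

lemma sum_lessThan_add_nat: "(\<Sum>i<a+b. f i) = (\<Sum>i<a. f i) + (\<Sum>i<b. f (a+i))"
  for f :: "nat \<Rightarrow> 'b::comm_monoid_add"
  by (induction b) (simp_all add: add.assoc)

lemma trace_frob: "trace t s y = (\<Sum>i<t div s. frob (s*i) y)"
  by (simp add: trace_def frob_def)

context
  fixes m :: nat
  assumes card: "card (UNIV::'a::{field,finite} set) = 2 ^ m" and mpos: "0 < m"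
begin

lemmas fadd = frob_add[OF card mpos]
lemmas fsum = frob_sum[OF card mpos]

lemma trace_add: "trace t s ((x::'a) + y) = trace t s x + trace t s y"
  by (simp add: trace_frob fadd sum.distrib)

lemma trace_0[simp]: "trace t s (0::'a) = 0"
  by (simp add: trace_frob)

lemma trace_sum: "trace t s (\<Sum>i\<in>I. f i :: 'a) = (\<Sum>i\<in>I. trace t s (f i))"
  by (induction I rule: infinite_finite_induct) (simp_all add: trace_add)

lemma frob_fix_mult: "frob s (y::'a) = y \<Longrightarrow> frob (s*u) y = y"
  by (induction u) (simp_all add: frob_add_exp)

lemma trace_shift1:
  assumes "s dvd t" "0 < s" "frob t (y::'a) = y"
  shows "trace t s (frob s y) = trace t s y"
proof -
  define M where "M = t div s"
  have tM: "s * M = t" using assms by (simp add: M_def)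
  define f where "f i = frob (s*i) y" for i
  have "trace t s (frob s y) = (\<Sum>i<M. f (Suc i))"
    by (simp add: trace_frob M_def f_def frob_add_exp[symmetric] add.commute)
  also have "\<dots> = (\<Sum>i<M. f i) + f M - f 0"
  proof -
    have "(\<Sum>i<Suc M. f i) = f 0 + (\<Sum>i<M. f (Suc i))" by (rule sum.lessThan_Suc_shift)
    moreover have "(\<Sum>i<Suc M. f i) = (\<Sum>i<M. f i) + f M" by simp
    ultimately show ?thesis by (simp add: algebra_simps)
  qed
  also have "f M = f 0" using tM assms(3) by (simp add: f_def)
  finally show ?thesis by (simp add: trace_frob M_def f_def)
qed

lemma trace_shift:
  assumes "s dvd t" "0 < s" "frob t (y::'a) = y"
  shows "trace t s (frob (s*u) y) = trace t s y"
proof (induction u)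
  case 0 then show ?case by simp
next
  case (Suc u)
  have "frob t (frob (s*u) y) = frob (s*u) (frob t y)"
    by (simp add: frob_add_exp[symmetric] add.commute)
  then have "frob t (frob (s*u) y) = frob (s*u) y" using assms(3) by simp
  then have "trace t s (frob s (frob (s*u) y)) = trace t s (frob (s*u) y)"
    using trace_shift1 assms by blast
  then show ?case using Suc by (simp add: frob_add_exp[symmetric] add.commute)
qed

lemma trace_in_sub:
  assumes "s dvd t" "0 < s" "frob t (y::'a) = y"
  shows "frob s (trace t s y) = trace t s y"
proof -
  have "frob s (trace t s y) = trace t s (frob s y)"
    by (simp add: trace_frob fsum frob_add_exp[symmetric] add.commute)
  then show ?thesis using trace_shift1[OF assms] by simp
qed

lemma trace_scalar:
  assumes "frob s (a::'a) = a"
  shows "trace t s (a * y) = a * trace t s y"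
  using frob_fix_mult[OF assms] by (simp add: trace_frob frob_mult sum_distrib_left)

lemma trace_split:
  assumes "s dvd n" "0 < s"
  shows "trace (2*n) s (y::'a) = trace n s y + trace n s (frob n y)"
proof -
  obtain r where n: "n = s * r" using assms by auto
  have "2*n div s = r + r" using n assms by simp
  then have "trace (2*n) s y = (\<Sum>i<r. frob (s*i) y) + (\<Sum>i<r. frob (s*(r+i)) y)"
    by (simp add: trace_frob sum_lessThan_add_nat)
  moreover have "frob (s*(r+i)) y = frob (s*i) (frob n y)" for i
    by (simp add: n frob_add_exp[symmetric] distrib_left add.commute)
  ultimately show ?thesis using n assms by (simp add: trace_frob)
qed

end

definition linp :: "nat \<Rightarrow> (nat \<Rightarrow> 'a::field) \<Rightarrow> nat \<Rightarrow> 'a \<Rightarrow> 'a" where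
  "linp d c R z = (\<Sum>i\<le>R. c i * frob (d*i) z)"

lemma linp_0[simp]: "linp d c R 0 = 0" by (simp add: linp_def)

context
  fixes m d :: nat
  assumes card: "card (UNIV::'a::{field,finite} set) = 2 ^ m" and mpos: "0 < m" and dpos: "0 < d"
begin

lemmas fadd3 = frob_add[OF card mpos]
lemmas fsum3 = frob_sum[OF card mpos]
lemmas aself3 = add_self[OF card mpos]

lemma add_eq0_iff: "(x::'a) + y = 0 \<longleftrightarrow> x = y"
  by (metis add_diff_cancel_right' aself3 diff_eq_add[OF card mpos] diff_zero)

lemma fixed_gcd:
  assumes "frob d (y::'a) = y"
  shows "frob (gcd m d) y = y"
proof -
  obtain x t where xt: "d * x = m * t + gcd d m" using bezout_nat[of d m] dpos by auto
  have "y = frob (d*x) y" using frob_fix_mult[OF card mpos assms] by simp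
  also have "\<dots> = frob (m*t) (frob (gcd d m) y)" by (simp add: xt frob_add_exp)
  also have "\<dots> = frob (gcd d m) y" by (simp add: frob_mult_m[OF card mpos])
  finally show ?thesis by (simp add: gcd.commute)
qed

lemma card_fixed:
  assumes "0 < e"
  shows "card {y::'a. frob e y = y} \<le> 2^e"
proof -
  have "1 < (2::nat)^e" using one_less_power[of "2::nat" e] assms by simp
  then have ne: "(1::nat) \<noteq> 2^e" by simp
  have "{y::'a. frob e y = y} = {y. (\<Sum>t\<in>{1, 2^e}. y^t) = 0}"
    using ne by (auto simp: frob_def add_eq0_iff)
  also have "card \<dots> \<le> Max {1, 2^e::nat}" by (rule roots_bound) auto
  also have "\<dots> = 2^e" by simp
  finally show ?thesis .
qed

lemma division:
  fixes w :: 'a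
  shows "\<exists>b r0. \<forall>z. (\<Sum>i\<le>R. c i * frob (d*i) z) = (\<Sum>i<R. b i * frob (d*i) (frob d z + w * z)) + r0 * z"
proof (induction R arbitrary: c)
  case 0 then show ?case by simp
next
  case (Suc R)
  define c' where "c' = c(R := c R + c (Suc R) * frob (d*R) w)"
  obtain b' r0 where IH: "\<And>z. (\<Sum>i\<le>R. c' i * frob (d*i) z) = (\<Sum>i<R. b' i * frob (d*i) (frob d z + w * z)) + r0 * z"
    using Suc[of c'] by blast
  define b where "b = b'(R := c (Suc R))"
  have "(\<Sum>i\<le>Suc R. c i * frob (d*i) z) = (\<Sum>i<Suc R. b i * frob (d*i) (frob d z + w * z)) + r0 * z" for z
  proof -
    have s1: "(\<Sum>i\<le>R. c' i * frob (d*i) z) = (\<Sum>i<R. c i * frob (d*i) z) + c' R * frob (d*R) z"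
      by (simp add: lessThan_Suc_atMost[symmetric] c'_def)
    have s2: "(\<Sum>i<Suc R. b i * frob (d*i) (frob d z + w * z)) = (\<Sum>i<R. b' i * frob (d*i) (frob d z + w * z)) + c (Suc R) * frob (d*R) (frob d z + w * z)"
      by (simp add: b_def)
    have s3: "frob (d*R) (frob d z + w * z) = frob (d * Suc R) z + frob (d*R) w * frob (d*R) z"
      by (simp add: fadd3 frob_mult frob_add_exp[symmetric] add.commute)
    have s4: "(\<Sum>i\<le>Suc R. c i * frob (d*i) z) = (\<Sum>i<R. c i * frob (d*i) z) + c R * frob (d*R) z + c (Suc R) * frob (d * Suc R) z"
      by (simp add: lessThan_Suc_atMost[symmetric])
    let ?X = "c (Suc R) * frob (d*R) w * frob (d*R) z"
    have c'R: "c' R = c R + c (Suc R) * frob (d*R) w" by (simp add: c'_def)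
    have "(\<Sum>i\<le>Suc R. c i * frob (d*i) z) = (\<Sum>i\<le>R. c' i * frob (d*i) z) - ?X + c (Suc R) * frob (d * Suc R) z"
      unfolding s4 s1 c'R by (simp add: algebra_simps)
    also have "\<dots> = (\<Sum>i\<le>R. c' i * frob (d*i) z) + ?X + c (Suc R) * frob (d * Suc R) z"
      by (simp add: diff_eq_add[OF card mpos])
    also have "\<dots> = (\<Sum>i<R. b' i * frob (d*i) (frob d z + w * z)) + r0 * z + c (Suc R) * frob (d*R) (frob d z + w * z)"
      unfolding IH s3 by (simp add: algebra_simps)
    finally show ?thesis unfolding s2 by (simp add: algebra_simps)
  qed
  then show ?case by blast
qed

lemma lin_roots:
  "\<forall>c. (\<exists>z. linp d c R (z::'a) \<noteq> 0) \<longrightarrow> card {z. linp d c R z = 0} \<le> 2^(gcd m d * R)"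
proof (induction R)
  case 0
  show ?case
  proof (intro allI impI)
    fix c :: "nat \<Rightarrow> 'a" assume "\<exists>z. linp d c 0 z \<noteq> 0"
    then have "c 0 \<noteq> 0" by (auto simp: linp_def)
    then have "{z. linp d c 0 z = 0} = {0}" by (auto simp: linp_def)
    then show "card {z. linp d c 0 z = 0} \<le> 2^(gcd m d * 0)" by simp
  qed
next
  case (Suc R)
  let ?e = "gcd m d"
  have epos: "0 < ?e" using mpos by simp
  show ?case
  proof (intro allI impI)
    fix c :: "nat \<Rightarrow> 'a" assume nz: "\<exists>z. linp d c (Suc R) z \<noteq> 0"
    let ?U = "{z. linp d c (Suc R) z = 0}"
    show "card ?U \<le> 2^(?e * Suc R)"
    proof (cases "?U \<subseteq> {0}")
      case True
      then have "card ?U \<le> card {0::'a}" by (intro card_mono) auto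
      also have "\<dots> \<le> 2^(?e * Suc R)" by simp
      finally show ?thesis .
    next
      case False
      then obtain u where u: "linp d c (Suc R) u = 0" "u \<noteq> 0" by auto
      define w where "w = frob d u / u"
      define \<psi> where "\<psi> z = frob d z + w * z" for z
      have \<psi>u: "\<psi> u = 0" using u by (simp add: \<psi>_def w_def aself3)
      have \<psi>add: "\<psi> (x + y) = \<psi> x + \<psi> y" for x y
        by (simp add: \<psi>_def fadd3 algebra_simps)
      obtain b r0 where div: "\<And>z. linp d c (Suc R) z = (\<Sum>i<Suc R. b i * frob (d*i) (\<psi> z)) + r0 * z"
        using division[where R="Suc R" and c=c and w=w] unfolding linp_def \<psi>_def by blast
      have div2: "linp d c (Suc R) z = linp d b R (\<psi> z) + r0 * z" for z
        using div[of z] by (simp add: linp_def lessThan_Suc_atMost)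
      have "r0 * u = 0" using div2[of u] u \<psi>u by simp
      then have "r0 = 0" using u by simp
      then have div3: "linp d c (Suc R) z = linp d b R (\<psi> z)" for z using div2 by simp
      have bnz: "\<exists>z. linp d b R z \<noteq> 0" using nz div3 by metis
      let ?V = "{v. linp d b R v = 0}"
      have IH: "card ?V \<le> 2^(?e * R)" using Suc bnz by blast
      let ?K = "{z. \<psi> z = 0}"
      have Kbound: "card ?K \<le> 2^?e"
      proof -
        have "?K \<subseteq> (\<lambda>y. u * y) ` {y. frob d y = y}"
        proof
          fix z assume "z \<in> ?K"
          then have "frob d z = w * z" by (simp add: \<psi>_def add_eq0_iff)
          then have fz: "frob d z = frob d u * inverse u * z" by (simp add: w_def divide_inverse)
          have fu: "frob d u \<noteq> 0" using u(2) by simp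
          have "frob d (z / u) = frob d z * inverse (frob d u)" by (simp add: divide_inverse frob_mult frob_inverse)
          also have "\<dots> = (frob d u * inverse (frob d u)) * (inverse u * z)" unfolding fz by (simp only: ac_simps)
          also have "\<dots> = z / u" using fu by (simp add: divide_inverse mult.commute)
          finally have "frob d (z / u) = z / u" .
          then show "z \<in> (\<lambda>y. u * y) ` {y. frob d y = y}"
            using u(2) by (auto intro!: image_eqI[of _ _ "z/u"])
        qed
        then have "card ?K \<le> card ((\<lambda>y. u * y) ` {y. frob d y = y})" by (intro card_mono) auto
        also have "\<dots> \<le> card {y::'a. frob d y = y}" by (rule card_image_le) auto
        also have "\<dots> \<le> card {y::'a. frob ?e y = y}" by (intro card_mono) (auto intro: fixed_gcd)
        also have "\<dots> \<le> 2^?e" by (rule card_fixed[OF epos])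
        finally show ?thesis .
      qed
      have fib: "card {z. \<psi> z = v} \<le> card ?K" for v
      proof (cases "\<exists>z0. \<psi> z0 = v")
        case True
        then obtain z0 where z0: "\<psi> z0 = v" by blast
        have "{z. \<psi> z = v} \<subseteq> (\<lambda>k. z0 + k) ` ?K"
        proof
          fix z assume "z \<in> {z. \<psi> z = v}"
          then have "\<psi> (z + z0) = 0" using z0 by (simp add: \<psi>add aself3)
          moreover have "z = z0 + (z + z0)" by (simp add: add.commute[of z z0] add.assoc[symmetric] aself3)
          ultimately show "z \<in> (\<lambda>k. z0 + k) ` ?K" by blast
        qed
        then have "card {z. \<psi> z = v} \<le> card ((\<lambda>k. z0 + k) ` ?K)" by (intro card_mono) auto
        also have "\<dots> \<le> card ?K" by (rule card_image_le) auto
        finally show ?thesis .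
      next
        case False then show ?thesis by simp
      qed
      have "?U = (\<Union>v\<in>?V. {z. \<psi> z = v})" using div3 by auto
      then have "card ?U \<le> (\<Sum>v\<in>?V. card {z. \<psi> z = v})" using card_UN_le[of ?V] by simp
      also have "\<dots> \<le> (\<Sum>v\<in>?V. card ?K)" by (intro sum_mono fib)
      also have "\<dots> = card ?V * card ?K" by simp
      also have "\<dots> \<le> 2^(?e * R) * 2^?e" by (intro mult_mono IH Kbound) auto
      also have "\<dots> = 2^(?e * Suc R)" by (simp add: power_add[symmetric] algebra_simps)
      finally show ?thesis .
    qed
  qed
qed

end

context
  fixes m :: nat and B :: "'a::{field,finite} \<Rightarrow> 'a \<Rightarrow> 'a" and K :: "'a set"
  assumes card: "card (UNIV::'a set) = 2 ^ m" and mpos: "0 < m"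
    and Badd: "\<And>x y z. B x (y + z) = B x y + B x z"
    and Bscal: "\<And>a x z. a \<in> K \<Longrightarrow> B x (a * z) = a * B x z"
    and Bsym: "\<And>x z. B x z = B z x"
    and Balt: "\<And>x. B x x = 0"
    and BK: "\<And>x z. B x z \<in> K"
    and Kinv: "\<And>a. a \<in> K \<Longrightarrow> inverse a \<in> K"
begin

lemmas aself4 = add_self[OF card mpos]

definition sub :: "'a set \<Rightarrow> bool" where
  "sub V \<longleftrightarrow> 0 \<in> V \<and> (\<forall>x\<in>V. \<forall>y\<in>V. x + y \<in> V) \<and> (\<forall>a\<in>K. \<forall>x\<in>V. a * x \<in> V)"

definition rad :: "'a set \<Rightarrow> 'a set" where
  "rad V = {z\<in>V. \<forall>v\<in>V. B v z = 0}"

lemma Badd1: "B (y + z) x = B y x + B z x" using Badd Bsym by metis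
lemma Bscal1: "a \<in> K \<Longrightarrow> B (a * z) x = a * B z x" using Bscal Bsym by metis

lemma B0[simp]: "B x 0 = 0"
proof -
  have "B x 0 + B x 0 = B x 0 + 0" using Badd[of x 0 0] by simp
  then show ?thesis by (simp only: add_left_cancel)
qed

lemma symp: "sub V \<Longrightarrow> \<exists>s. card V = card (rad V) * card K ^ (2*s)"
proof (induction "card V" arbitrary: V rule: less_induct)
  case less
  show ?case
  proof (cases "rad V = V")
    case True then show ?thesis by (intro exI[of _ 0]) simp
  next
    case False
    then obtain x where x: "x \<in> V" "x \<notin> rad V" unfolding rad_def by auto
    then obtain v where v: "v \<in> V" "B v x \<noteq> 0" unfolding rad_def by auto
    define y where "y = inverse (B v x) * v"
    have yV: "y \<in> V" using less.prems v BK Kinv unfolding sub_def y_def by auto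
    have yx: "B y x = 1" using v BK Kinv by (simp add: y_def Bscal1)
    have xy: "B x y = 1" using yx Bsym by metis
    define g where "g ab = snd ab * x + fst ab * y" for ab
    define V2 where "V2 = {z\<in>V. B x z = 0 \<and> B y z = 0}"
    have gV: "ab \<in> K \<times> K \<Longrightarrow> g ab \<in> V" for ab
      using less.prems x yV unfolding sub_def g_def by (cases ab) auto
    have Bxg: "ab \<in> K \<times> K \<Longrightarrow> B x (g ab) = fst ab" for ab
      by (cases ab) (auto simp: g_def Badd Bscal Balt xy)
    have Byg: "ab \<in> K \<times> K \<Longrightarrow> B y (g ab) = snd ab" for ab
      by (cases ab) (auto simp: g_def Badd Bscal Balt yx)
    have subV2: "sub V2" using less.prems unfolding sub_def V2_def by (auto simp: Badd Bscal)
    have V2V: "V2 \<subseteq> V" by (auto simp: V2_def)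
    have "x \<notin> V2" using yx by (auto simp: V2_def Bsym[of y x])
    then have "V2 \<subset> V" using V2V x by auto
    then have lt: "card V2 < card V" by (intro psubset_card_mono) auto
    obtain s where s: "card V2 = card (rad V2) * card K ^ (2*s)" using less.hyps[OF lt subV2] by blast
    define h where "h p = g (fst p) + snd p" for p
    have bij: "bij_betw h ((K \<times> K) \<times> V2) V"
    proof -
      have "inj_on h ((K \<times> K) \<times> V2)"
      proof (rule inj_onI)
        fix p q assume p: "p \<in> (K \<times> K) \<times> V2" and q: "q \<in> (K \<times> K) \<times> V2" and e: "h p = h q"
        have "B x (h p) = fst (fst p)" using p Bxg[of "fst p"] by (auto simp: h_def Badd V2_def)
        moreover have "B x (h q) = fst (fst q)" using q Bxg[of "fst q"] by (auto simp: h_def Badd V2_def)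
        moreover have "B y (h p) = snd (fst p)" using p Byg[of "fst p"] by (auto simp: h_def Badd V2_def)
        moreover have "B y (h q) = snd (fst q)" using q Byg[of "fst q"] by (auto simp: h_def Badd V2_def)
        ultimately have "fst p = fst q" using e by (simp add: prod_eq_iff)
        moreover then have "snd p = snd q" using e by (simp add: h_def)
        ultimately show "p = q" by (simp add: prod_eq_iff)
      qed
      moreover have "h ` ((K \<times> K) \<times> V2) = V"
      proof
        show "h ` ((K \<times> K) \<times> V2) \<subseteq> V"
          using gV less.prems V2V unfolding sub_def h_def by auto
        show "V \<subseteq> h ` ((K \<times> K) \<times> V2)"
        proof
          fix z assume z: "z \<in> V"
          define ab where "ab = (B x z, B y z)"
          have abK: "ab \<in> K \<times> K" using BK by (simp add: ab_def)
          define w where "w = z + g ab"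
          have "w \<in> V" using z gV[OF abK] less.prems unfolding sub_def w_def by auto
          moreover have "B x w = 0" using Bxg[OF abK] by (simp add: w_def Badd ab_def aself4)
          moreover have "B y w = 0" using Byg[OF abK] by (simp add: w_def Badd ab_def aself4)
          ultimately have "(ab, w) \<in> (K \<times> K) \<times> V2" using abK by (simp add: V2_def)
          moreover have "h (ab, w) = z + (g ab + g ab)" by (simp add: h_def w_def ac_simps)
          then have "h (ab, w) = z" by (simp add: aself4)
          ultimately show "z \<in> h ` ((K \<times> K) \<times> V2)" by force
        qed
      qed
      ultimately show ?thesis by (simp add: bij_betw_def)
    qed
    have cV: "card V = card K * card K * card V2"
      using bij_betw_same_card[OF bij] by (simp add: card_cartesian_product)
    have "rad V2 = rad V"
    proof
      show "rad V \<subseteq> rad V2" using x(1) yV V2V unfolding rad_def V2_def by (auto simp: Bsym)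
      show "rad V2 \<subseteq> rad V"
      proof
        fix z assume z: "z \<in> rad V2"
        then have zV2: "z \<in> V2" by (simp add: rad_def)
        have "B u z = 0" if u: "u \<in> V" for u
        proof -
          define ab where "ab = (B x u, B y u)"
          have abK: "ab \<in> K \<times> K" using BK by (simp add: ab_def)
          have "u + g ab \<in> V2"
            using u gV[OF abK] less.prems Bxg[OF abK] Byg[OF abK] unfolding sub_def V2_def
            by (auto simp: Badd ab_def aself4)
          then have "B (u + g ab) z = 0" using z by (simp add: rad_def)
          moreover have "B (g ab) z = 0"
          proof -
            have "B z x = 0" "B z y = 0" using zV2 Bsym by (auto simp: V2_def)
            then have "B z (g ab) = 0" using abK by (cases ab) (auto simp: g_def Badd Bscal)
            then show ?thesis using Bsym by metis
          qed
          ultimately show ?thesis by (simp add: Badd1)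
        qed
        then show "z \<in> rad V" using zV2 V2V by (auto simp: rad_def)
      qed
    qed
    then show ?thesis using s cV by (intro exI[of _ "Suc s"]) (simp add: algebra_simps)
  qed
qed

end

definition sg :: "'a::field \<Rightarrow> int" where "sg u = (if u = 1 then -1 else 1)"

context
  fixes m :: nat and h :: "'a::{field,finite} \<Rightarrow> 'a" and \<beta> :: "'a \<Rightarrow> 'a \<Rightarrow> 'a"
  assumes card: "card (UNIV::'a set) = 2 ^ m" and mpos: "0 < m"
    and hbit: "\<And>x. h x = 0 \<or> h x = 1"
    and bbit: "\<And>x z. \<beta> x z = 0 \<or> \<beta> x z = 1"
    and hadd: "\<And>x z. h (x + z) = h x + h z + \<beta> x z"
    and badd: "\<And>x y z. \<beta> (x + y) z = \<beta> x z + \<beta> y z"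
    and bsym: "\<And>x z. \<beta> x z = \<beta> z x"
begin

lemmas aself5 = add_self[OF card mpos]

lemma sg_add: "(u = 0 \<or> u = (1::'a)) \<Longrightarrow> (v = 0 \<or> v = 1) \<Longrightarrow> sg (u + v) = sg u * sg v \<and> (u + v = 0 \<or> u + v = 1)"
  by (auto simp: sg_def aself5)

lemma sg_sq: "sg u * sg u = 1" by (simp add: sg_def)

lemma chi_add: "sg (h (x + z)) = sg (h x) * sg (h z) * sg (\<beta> x z)"
  using sg_add[OF hbit[of x] hbit[of z]] sg_add[of "h x + h z" "\<beta> x z"] bbit[of x z]
  by (simp add: hadd)

lemma badd2: "\<beta> x (y + z) = \<beta> x y + \<beta> x z" using badd bsym by metis

lemma b0: "\<beta> x 0 = 0"
proof -
  have "\<beta> x 0 + \<beta> x 0 = \<beta> x 0 + 0" using badd2[of x 0 0] by simp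
  then show ?thesis by (simp only: add_left_cancel)
qed

lemma psi_sum:
  "(\<Sum>x\<in>UNIV. sg (\<beta> x z)) = (if (\<forall>x. \<beta> x z = 0) then int (2^m) else 0)"
proof (cases "\<forall>x. \<beta> x z = 0")
  case True then show ?thesis by (simp add: sg_def card)
next
  case False
  then obtain x0 where "\<beta> x0 z \<noteq> 0" by blast
  then have x0: "\<beta> x0 z = 1" using bbit by metis
  have "(\<Sum>x\<in>UNIV. sg (\<beta> x z)) = (\<Sum>x\<in>UNIV. sg (\<beta> (x + x0) z))"
    by (rule sum.reindex_bij_betw[symmetric])
       (auto simp: bij_betw_def inj_on_def image_def intro!: exI[of _ "x + x0" for x] simp: add.assoc aself5)
  also have "\<dots> = (\<Sum>x\<in>UNIV. - sg (\<beta> x z))"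
  proof (intro sum.cong refl)
    fix x
    have "sg (\<beta> x z + 1) = sg (\<beta> x z) * sg (1::'a)" using sg_add[OF bbit[of x z], of 1] by auto
    then show "sg (\<beta> (x + x0) z) = - sg (\<beta> x z)" using x0 by (simp add: badd sg_def)
  qed
  finally show ?thesis using False by (simp add: sum_negf)
qed

definition Wr where "Wr = {z. \<forall>x. \<beta> x z = 0}"

lemma char_sum:
  "(\<Sum>x\<in>UNIV. sg (h x)) = 0 \<or>
   ((\<Sum>x\<in>UNIV. sg (h x))^2 = 2^m * int (card Wr) \<and> (\<forall>z\<in>Wr. sg (h z) = 1))"
proof -
  let ?S = "\<Sum>x\<in>UNIV. sg (h x)"
  have "?S^2 = (\<Sum>x\<in>UNIV. \<Sum>y\<in>UNIV. sg (h x) * sg (h y))"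
    by (simp add: power2_eq_square sum_product)
  also have "\<dots> = (\<Sum>x\<in>UNIV. \<Sum>z\<in>UNIV. sg (h x) * sg (h (x + z)))"
  proof (rule sum.cong[OF refl])
    fix x :: 'a
    show "(\<Sum>y\<in>UNIV. sg (h x) * sg (h y)) = (\<Sum>z\<in>UNIV. sg (h x) * sg (h (x + z)))"
      by (rule sum.reindex_bij_betw[symmetric, where h="\<lambda>z. x + z"])
         (auto simp: bij_betw_def inj_on_def image_def intro!: exI[of _ "x + y" for y] simp: add.assoc[symmetric] aself5)
  qed
  also have "\<dots> = (\<Sum>x\<in>UNIV. \<Sum>z\<in>UNIV. sg (h z) * sg (\<beta> x z))"
    by (intro sum.cong refl) (simp add: chi_add mult.assoc[symmetric] sg_sq)
  also have "\<dots> = (\<Sum>z\<in>UNIV. sg (h z) * (\<Sum>x\<in>UNIV. sg (\<beta> x z)))"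
    by (subst sum.swap) (simp add: sum_distrib_left)
  also have "\<dots> = (\<Sum>z\<in>UNIV. if z \<in> Wr then sg (h z) * 2^m else 0)"
    by (intro sum.cong refl) (simp add: psi_sum Wr_def)
  also have "\<dots> = 2^m * (\<Sum>z\<in>Wr. sg (h z))"
    by (simp add: sum.If_cases sum_distrib_left mult.commute)
  finally have S2: "?S^2 = 2^m * (\<Sum>z\<in>Wr. sg (h z))" .
  show ?thesis
  proof (cases "\<exists>z0\<in>Wr. sg (h z0) = -1")
    case True
    then obtain z0 where z0: "z0 \<in> Wr" "sg (h z0) = -1" by blast
    have "(\<Sum>z\<in>Wr. sg (h z)) = (\<Sum>z\<in>Wr. sg (h (z + z0)))"
    proof (rule sum.reindex_bij_betw[symmetric])
      show "bij_betw (\<lambda>z. z + z0) Wr Wr"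
        unfolding bij_betw_def inj_on_def image_def
      proof (intro conjI ballI impI)
        show "{y. \<exists>x\<in>Wr. y = x + z0} = Wr"
        proof
          show "{y. \<exists>x\<in>Wr. y = x + z0} \<subseteq> Wr" using z0 by (auto simp: Wr_def badd2)
          show "Wr \<subseteq> {y. \<exists>x\<in>Wr. y = x + z0}"
          proof
            fix y assume "y \<in> Wr"
            then have "y + z0 \<in> Wr" "y = (y + z0) + z0" using z0 by (auto simp: Wr_def badd2 add.assoc aself5)
            then show "y \<in> {y. \<exists>x\<in>Wr. y = x + z0}" by blast
          qed
        qed
      qed simp
    qed
    also have "\<dots> = (\<Sum>z\<in>Wr. - sg (h z))"
    proof (intro sum.cong refl)
      fix z assume "z \<in> Wr"
      have "\<beta> z z0 = 0" using z0 by (simp add: Wr_def)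
      moreover have "sg (0::'a) = 1" by (simp add: sg_def)
      ultimately show "sg (h (z + z0)) = - sg (h z)" using z0 by (simp add: chi_add)
    qed
    finally have "(\<Sum>z\<in>Wr. sg (h z)) = 0" by (simp add: sum_negf)
    then show ?thesis using S2 by simp
  next
    case False
    then have "\<forall>z\<in>Wr. sg (h z) = 1" by (auto simp: sg_def)
    then show ?thesis using S2 by simp
  qed
qed

end

lemma dvd_pow_minus1: "(x::nat) \<ge> 1 \<Longrightarrow> x - 1 dvd x ^ t - 1"
proof (induction t)
  case 0 then show ?case by simp
next
  case (Suc t)
  have "x ^ Suc t - 1 = x * (x^t - 1) + (x - 1)"
    using Suc.prems by (simp add: algebra_simps diff_mult_distrib2)
  then show ?case using Suc by (metis dvd_add dvd_mult dvd_refl)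
qed

definition isLin :: "nat \<Rightarrow> nat \<Rightarrow> ('a::field \<Rightarrow> 'a) \<Rightarrow> bool" where
  "isLin d R f \<longleftrightarrow> (\<exists>c. \<forall>z. f z = linp d c R z)"

lemma isLin_term: "i \<le> R \<Longrightarrow> isLin d R (\<lambda>z. co * frob (d*i) z)"
  unfolding isLin_def linp_def
proof (intro exI[of _ "\<lambda>j. if j = i then co else 0"] allI)
  fix z assume "i \<le> R"
  have "(\<Sum>j\<le>R. (if j = i then co else 0) * frob (d*j) z) = (\<Sum>j\<le>R. if j = i then co * frob (d*j) z else 0)"
    by (intro sum.cong) auto
  also have "\<dots> = co * frob (d*i) z" using \<open>i \<le> R\<close> by (simp add: sum.delta)
  finally show "co * frob (d*i) z = (\<Sum>j\<le>R. (if j = i then co else 0) * frob (d*j) z)" by simp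
qed

lemma isLin_add: "isLin d R f \<Longrightarrow> isLin d R g \<Longrightarrow> isLin d R (\<lambda>z. f z + g z)"
  unfolding isLin_def linp_def
  by (elim exE, rename_tac c c', rule_tac x="\<lambda>i. c i + c' i" in exI) (simp add: sum.distrib algebra_simps)

lemma isLin_zero: "isLin d R (\<lambda>z. 0)"
  unfolding isLin_def linp_def by (intro exI[of _ "\<lambda>_. 0"]) simp

lemma isLin_sum: "finite I \<Longrightarrow> (\<And>j. j \<in> I \<Longrightarrow> isLin d R (f j)) \<Longrightarrow> isLin d R (\<lambda>z. \<Sum>j\<in>I. f j z)"
  by (induction I rule: finite_induct) (simp_all add: isLin_zero isLin_add)


lemma ar1: "d = e*(2*h+1) \<Longrightarrow> n = e*r \<Longrightarrow> m = 2*n \<Longrightarrow> r*d = m*h + (n::nat)"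
  by (simp add: algebra_simps)
lemma ar3: "d = e*(2*h+1) \<Longrightarrow> n = e*r \<Longrightarrow> m = 2*n \<Longrightarrow> 2*r*d = m*(2*h+1::nat)"
  by (simp add: algebra_simps)

context
  fixes m n d e k :: nat and a0 :: "'a::{field,finite}" and a :: "nat \<Rightarrow> 'a"
  assumes card: "card (UNIV::'a set) = 2^m" and npos: "0 < n" and dpos: "0 < d" and epos: "0 < e"
    and kpos: "1 \<le> k" and m2n: "m = 2*n" and egcd: "e = gcd n d" and egcd2: "e = gcd m d"
    and kr: "k \<le> n div e" and a0n: "frob n a0 = a0"
begin

lemma mpos: "0 < m" using m2n npos by simp

lemmas fadd7 = frob_add[OF card mpos]
lemmas fsum7 = frob_sum[OF card mpos]
lemmas aself7 = add_self[OF card mpos]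
lemmas fcong = frob_cong[OF card mpos]
lemmas fmm = frob_mult_m[OF card mpos]
lemmas tadd = trace_add[OF card mpos]
lemmas tsum = trace_sum[OF card mpos]
lemmas fm = frob_m[OF card mpos]
lemmas t0z = trace_0[OF card mpos]

lemma aself2: "(x::'a) + (x + y) = y" by (simp add: add.assoc[symmetric] aself7)

definition r where "r = n div e"
lemma e_dvd_n0: "e dvd n" using egcd by simp
lemma ner: "n = e * r" unfolding r_def using e_dvd_n0 by simp
lemma rpos: "k \<le> r" using kr by (simp add: r_def)
lemma mer: "m = 2 * e * r" using ner m2n by (metis mult.assoc)

definition m1 where "m1 = m - 1"
lemma m1: "m = Suc m1" using mpos by (simp add: m1_def)
lemma mm1: "m1 * x + x = m * x"
proof -
  have "m * x = Suc m1 * x" using m1 by (rule arg_cong)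
  then show ?thesis by simp
qed

lemma e_dvd_d: "e dvd d" using egcd by simp
lemma e_dvd_n: "e dvd n" using egcd by simp
lemma e_dvd_m: "e dvd m" using egcd2 by simp

lemma delta_odd: "\<exists>h. d = e * (2*h + 1)"
proof -
  obtain \<delta> where d: "d = e * \<delta>" using e_dvd_d by blast
  have "odd \<delta>"
  proof
    assume "even \<delta>"
    then obtain \<delta>' where "\<delta> = 2 * \<delta>'" by blast
    then have "2*e dvd d" "2*e dvd m" using d mer by auto
    then have "2*e dvd e" using egcd2 by simp
    then show False using epos by (simp add: dvd_imp_le)
  qed
  then obtain h where "\<delta> = 2*h+1" by (metis oddE)
  then show ?thesis using d by blast
qed

lemma frob_e_dvd:
  assumes "e dvd t" "frob e (y::'a) = y" shows "frob t y = y"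
proof -
  obtain u where "t = e*u" using assms(1) by blast
  then show ?thesis using frob_fix_mult[OF card mpos assms(2)] by simp
qed

lemma frob_nde: "frob (n*d div e) (x::'a) = frob n x"
proof -
  obtain h where h: "d = e * (2*h+1)" using delta_odd by blast
  have "n*d = e*(n + m*h)" by (simp add: h m2n algebra_simps)
  then have "n*d div e = n + m*h" using epos by simp
  then show ?thesis by (simp add: frob_add_exp fmm)
qed

lemma pow_frob: "(x::'a) ^ (2^s + 1) = frob s x * x" by (simp add: frob_def)

lemma T0_shift:
  assumes "e dvd s"
  shows "trace m e (c * frob s x * z) = trace m e ((x::'a) * frob (m1*s) (c*z))"
proof -
  obtain u where u: "m1 * s = e * u" using assms by (metis dvd_mult dvd_def)
  have "trace m e (c * frob s x * z) = trace m e (frob (e*u) (c * frob s x * z))"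
    by (rule trace_shift[OF card mpos e_dvd_m epos, of "c * frob s x * z" u, symmetric]) (simp add: fm)
  also have "frob (e*u) (c * frob s x * z) = frob (m1*s) c * frob (m1*s + s) x * frob (m1*s) z"
    by (simp add: u[symmetric] frob_mult frob_add_exp)
  also have "m1 * s + s = m * s" by (rule mm1)
  also have "frob (m*s) x = x" by (rule fmm)
  finally have "trace m e (c * frob s x * z) = trace m e (frob (m1*s) c * x * frob (m1*s) z)" .
  then show ?thesis by (simp add: frob_mult mult.commute mult.left_commute)
qed

lemma cancel6: "(p::'a) + q + u + v + p + v = q + u"
proof -
  have "p + q + u + v + p + v = q + u + 2*p + 2*v" by algebra
  then show ?thesis using two_zero[OF card mpos] by simp
qed

lemma G1:
  assumes "e dvd s"
  shows "trace m e (c * (x+z)^(2^s+1)) + trace m e (c * x^(2^s+1)) + trace m e (c * z^(2^s+1))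
       = trace m e ((x::'a) * (c * frob s z + frob (m1*s) (c*z)))"
proof -
  have e1: "c * (x+z)^(2^s+1) = c * frob s x * x + c * frob s x * z + c * frob s z * x + c * frob s z * z"
    unfolding pow_frob fadd7 by (simp add: algebra_simps)
  have "trace m e (c * (x+z)^(2^s+1)) + trace m e (c * x^(2^s+1)) + trace m e (c * z^(2^s+1))
     = trace m e (c * frob s x * z) + trace m e (c * frob s z * x)"
    apply (subst e1)
    apply (unfold pow_frob tadd mult.assoc[symmetric])
    by (rule cancel6)
  also have "trace m e (c * frob s x * z) = trace m e (x * frob (m1*s) (c*z))"
    by (rule T0_shift[OF assms])
  also have "trace m e (c * frob s z * x) = trace m e (x * (c * frob s z))"
    by (simp only: mult.commute)
  finally show ?thesis by (simp only: tadd distrib_left add.commute)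
qed

lemma G0:
  "trace n e (a0 * (x+z)^(2^(n*d div e)+1)) + trace n e (a0 * x^(2^(n*d div e)+1)) + trace n e (a0 * z^(2^(n*d div e)+1))
   = trace m e ((x::'a) * frob (m1*n) (a0*z))"
proof -
  let ?y = "a0 * frob n x * z"
  have e1: "a0 * (x+z)^(2^(n*d div e)+1) = a0 * frob n x * x + a0 * frob n x * z + a0 * frob n z * x + a0 * frob n z * z"
    unfolding pow_frob frob_nde fadd7 by (simp add: algebra_simps)
  have "trace n e (a0 * (x+z)^(2^(n*d div e)+1)) + trace n e (a0 * x^(2^(n*d div e)+1)) + trace n e (a0 * z^(2^(n*d div e)+1))
     = trace n e ?y + trace n e (a0 * frob n z * x)"
    apply (subst e1)
    apply (unfold pow_frob frob_nde tadd mult.assoc[symmetric])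
    by (rule cancel6)
  also have "a0 * frob n z * x = frob n ?y"
  proof -
    have "frob n ?y = frob n a0 * frob (n+n) x * frob n z" by (simp add: frob_mult frob_add_exp)
    also have "n + n = m" using m2n by simp
    finally have "frob n ?y = a0 * x * frob n z" using a0n by (simp add: fm)
    then show ?thesis by (simp add: mult.commute mult.left_commute)
  qed
  also have "trace n e ?y + trace n e (frob n ?y) = trace m e ?y"
    using trace_split[OF card mpos e_dvd_n epos] by (simp add: m2n)
  also have "\<dots> = trace m e (x * frob (m1*n) (a0*z))" by (rule T0_shift[OF e_dvd_n])
  finally show ?thesis .
qed

definition sj where "sj j = (r - j) * d"
definition L :: "'a \<Rightarrow> 'a" where
  "L z = frob (m1*n) (a0*z) + (\<Sum>j\<in>{1..<k}. a j * frob (sj j) z + frob (m1 * sj j) (a j * z))"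
definition Q :: "'a \<Rightarrow> 'a" where "Q x = Qf m n d e k a0 a x"
definition Bq :: "'a \<Rightarrow> 'a \<Rightarrow> 'a" where "Bq x z = trace m e (x * L z)"

lemma e_dvd_sj: "e dvd sj j" using e_dvd_d by (simp add: sj_def)

lemma regroup3: "((a1::'a)+b1+c1) + (a2+b2+c2) + (a3+b3+c3) = (a1+a2+a3) + (b1+b2+b3) + (c1+c2+c3)"
  by (simp add: algebra_simps)

lemma cancel4: "(p::'a) + q + p + q = 0"
proof -
  have "p + q + p + q = 2*p + 2*q" by algebra
  then show ?thesis using two_zero[OF card mpos] by simp
qed

lemma Bq_formula: "Q (x+z) + Q x + Q z = Bq x z"
proof -
  define A where "A y = trace n e (a0 * y^(2^(n*d div e)+1))" for y
  define S where "S y = (\<Sum>j\<in>{1..<k}. trace m e (a j * y^(2^(sj j)+1)))" for y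
  define C where "C y = trace m e (a k * y)" for y
  have Qe: "Q y = A y + S y + C y" for y
    by (simp add: Q_def Qf_def A_def S_def C_def sj_def r_def)
  have Cz: "C (x+z) + C x + C z = 0"
    unfolding C_def distrib_left tadd by (rule cancel4)
  have Sz: "S (x+z) + S x + S z = (\<Sum>j\<in>{1..<k}. trace m e (x * (a j * frob (sj j) z + frob (m1 * sj j) (a j * z))))"
    unfolding S_def sum.distrib[symmetric] by (intro sum.cong refl G1 e_dvd_sj)
  have Az: "A (x+z) + A x + A z = trace m e (x * frob (m1*n) (a0*z))"
    unfolding A_def by (rule G0)
  have "Q (x+z) + Q x + Q z = (A (x+z) + A x + A z) + (S (x+z) + S x + S z) + (C (x+z) + C x + C z)"
    unfolding Qe by (rule regroup3)
  also have "\<dots> = trace m e (x * L z)"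
    unfolding Cz Sz Az L_def by (simp add: distrib_left sum_distrib_left tadd tsum)
  finally show ?thesis by (simp add: Bq_def)
qed

lemma L_add: "L (y+z) = L y + L z"
proof -
  have "L (y+z) = (frob (m1*n) (a0*y) + frob (m1*n) (a0*z)) +
     ((\<Sum>j\<in>{1..<k}. a j * frob (sj j) y + frob (m1 * sj j) (a j * y)) + (\<Sum>j\<in>{1..<k}. a j * frob (sj j) z + frob (m1 * sj j) (a j * z)))"
    unfolding L_def sum.distrib[symmetric] by (simp add: fadd7 distrib_left algebra_simps)
  then show ?thesis unfolding L_def by (simp add: algebra_simps)
qed

lemma L_scal:
  assumes c: "frob e c = c"
  shows "L (c*z) = c * L z"
proof -
  have fc: "frob t c = c" if "e dvd t" for t using frob_e_dvd[OF that c] .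
  have f1: "frob (m1*n) c = c" by (rule fc) (simp add: e_dvd_n)
  have f2: "frob (sj j) c = c" for j by (rule fc) (rule e_dvd_sj)
  have f3: "frob (m1 * sj j) c = c" for j by (rule fc) (simp add: e_dvd_sj)
  show ?thesis unfolding L_def
    by (simp add: frob_mult f1 f2 f3 distrib_left sum_distrib_left mult.left_commute)
qed

lemma Badd: "Bq x (y+z) = Bq x y + Bq x z"
  by (simp add: Bq_def L_add distrib_left tadd)

lemma Bscal: "frob e c = c \<Longrightarrow> Bq x (c*z) = c * Bq x z"
  by (simp add: Bq_def L_scal mult.left_commute trace_scalar[OF card mpos])

lemma Bsym: "Bq x z = Bq z x"
  using Bq_formula[of x z] Bq_formula[of z x] by (simp add: add.commute add.left_commute)

lemma Q0: "Q 0 = 0"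
  by (simp add: Q_def Qf_def t0z)

lemma Balt: "Bq x x = 0"
  using Bq_formula[of x x] by (simp add: aself7 Q0)

lemma BK: "frob e (Bq x z) = Bq x z"
  unfolding Bq_def by (rule trace_in_sub[OF card mpos e_dvd_m epos]) (simp add: fm)

lemma QK: "frob e (Q x) = Q x"
proof -
  define y where "y = a0 * x^(2^(n*d div e)+1)"
  have y: "y = a0 * frob n x * x" by (unfold y_def pow_frob frob_nde) (simp add: mult.assoc)
  have "frob n y = frob n a0 * frob (n+n) x * frob n x" by (simp add: y frob_mult frob_add_exp)
  also have "n + n = m" using m2n by simp
  finally have fy: "frob n y = y" using a0n by (simp add: y fm mult.commute mult.left_commute)
  have tm: "frob e (trace m e w) = trace m e w" for w :: 'a
    by (rule trace_in_sub[OF card mpos e_dvd_m epos]) (simp add: fm)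
  have tn: "frob e (trace n e y) = trace n e y"
    by (rule trace_in_sub[OF card mpos e_dvd_n epos fy])
  show ?thesis
    unfolding Q_def Qf_def y_def[symmetric] by (simp add: fadd7 fsum7 tm tn)
qed

lemma bit01:
  assumes "frob e (u::'a) = u"
  shows "trace e 1 u = 0 \<or> trace e 1 u = 1"
proof -
  have "frob 1 (trace e 1 u) = trace e 1 u"
    by (rule trace_in_sub[OF card mpos]) (use assms in auto)
  then have "(trace e 1 u) * (trace e 1 u - 1) = 0" by (simp add: frob_def algebra_simps power2_eq_square)
  then show ?thesis by simp
qed

lemma fshift: "frob (b + m*X) (z::'a) = frob b z"
  by (simp add: frob_add_exp fmm)

definition k1 where "k1 = k - 1"
definition T where "T = (k1 + r) * d"

lemma rep: "isLin d (2*k1) (\<lambda>z. frob T (L z))"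
proof -
  obtain h where h: "d = e * (2*h+1)" using delta_odd by blast
  have E1: "r*d = m*h + n" by (rule ar1[OF h ner m2n])
  have E2: "m1*n + n = m*n" by (rule mm1)
  have E3: "2*r*d = m*(2*h+1)" by (rule ar3[OF h ner m2n])
  have k1k: "k = Suc k1" using kpos by (simp add: k1_def)
  have t0: "(\<lambda>z. frob T (frob (m1*n) (a0*z))) = (\<lambda>z. frob (T + m1*n) a0 * frob (d*k1) z)"
  proof
    fix z :: 'a
    have "T + m1*n = d*k1 + m*(h+n)"
    proof -
      have "T + m1*n = k1*d + r*d + m1*n" by (simp add: T_def algebra_simps)
      also have "\<dots> = k1*d + m*h + (m1*n + n)" using E1 by simp
      also have "\<dots> = d*k1 + m*(h+n)" using E2 by (simp add: algebra_simps)
      finally show ?thesis .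
    qed
    then have "frob (T + m1*n) z = frob (d*k1) z" using fshift[of "d*k1" "h+n" z] by simp
    moreover have "frob T (frob (m1*n) (a0*z)) = frob (T + m1*n) a0 * frob (T + m1*n) z"
      by (simp only: frob_add_exp frob_mult)
    ultimately show "frob T (frob (m1*n) (a0*z)) = frob (T + m1*n) a0 * frob (d*k1) z" by simp
  qed
  have t1: "(\<lambda>z. frob T (a j * frob (sj j) z)) = (\<lambda>z. frob T (a j) * frob (d*(k1 - j)) z)" if j: "j \<in> {1..<k}" for j
  proof
    fix z :: 'a
    have jk: "j \<le> k1" "j \<le> r" using j rpos by (auto simp: k1_def)
    have "T + sj j = d*(k1-j) + m*(2*h+1)"
    proof -
      have "(k1 + r) + (r - j) = (k1 - j) + 2*r" using jk by simp
      then have "T + sj j = ((k1 - j) + 2*r) * d" by (simp add: T_def sj_def add_mult_distrib[symmetric])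
      also have "\<dots> = d*(k1-j) + m*(2*h+1)" using E3 by (simp add: algebra_simps)
      finally show ?thesis .
    qed
    then have "frob (T + sj j) z = frob (d*(k1-j)) z" by (simp only: fshift)
    moreover have "frob T (a j * frob (sj j) z) = frob T (a j) * frob (T + sj j) z"
      by (simp only: frob_add_exp frob_mult)
    ultimately show "frob T (a j * frob (sj j) z) = frob T (a j) * frob (d*(k1 - j)) z" by simp
  qed
  have t2: "(\<lambda>z. frob T (frob (m1 * sj j) (a j * z))) = (\<lambda>z. frob (T + m1 * sj j) (a j) * frob (d*(k1 + j)) z)" if j: "j \<in> {1..<k}" for j
  proof
    fix z :: 'a
    have jk: "j \<le> k1" "j \<le> r" using j rpos by (auto simp: k1_def)
    have "T + m1 * sj j = d*(k1+j) + m*((r-j)*d)"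
    proof -
      have "(k1 + r) = (k1 + j) + (r - j)" using jk by simp
      then have "T + m1 * sj j = ((k1 + j) + (r - j)) * d + m1 * ((r-j)*d)" by (simp only: T_def sj_def)
      also have "\<dots> = (k1 + j) * d + (r - j) * d + m1 * ((r-j)*d)" by (simp only: add_mult_distrib)
      also have "\<dots> = d*(k1+j) + m*((r-j)*d)" using mm1[of "(r-j)*d"] by (simp add: algebra_simps)
      finally show ?thesis .
    qed
    then have "frob (T + m1 * sj j) z = frob (d*(k1+j)) z" by (simp only: fshift)
    moreover have "frob T (frob (m1 * sj j) (a j * z)) = frob (T + m1 * sj j) (a j) * frob (T + m1 * sj j) z"
      by (simp only: frob_add_exp frob_mult)
    ultimately show "frob T (frob (m1 * sj j) (a j * z)) = frob (T + m1 * sj j) (a j) * frob (d*(k1 + j)) z" by simp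
  qed
  have eq: "(\<lambda>z. frob T (L z)) = (\<lambda>z. frob T (frob (m1*n) (a0*z)) +
      (\<Sum>j\<in>{1..<k}. frob T (a j * frob (sj j) z) + frob T (frob (m1 * sj j) (a j * z))))"
    by (simp add: L_def fadd7 fsum7)
  have "isLin d (2*k1) (\<lambda>z. frob T (frob (m1*n) (a0*z)))"
    unfolding t0 by (rule isLin_term) simp
  moreover have "isLin d (2*k1) (\<lambda>z. \<Sum>j\<in>{1..<k}. frob T (a j * frob (sj j) z) + frob T (frob (m1 * sj j) (a j * z)))"
  proof (rule isLin_sum)
    fix j assume j: "j \<in> {1..<k}"
    have jk: "j \<le> k1" using j by (auto simp: k1_def)
    show "isLin d (2*k1) (\<lambda>z. frob T (a j * frob (sj j) z) + frob T (frob (m1 * sj j) (a j * z)))"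
    proof (rule isLin_add[where f="\<lambda>z. frob T (a j * frob (sj j) z)" and g="\<lambda>z. frob T (frob (m1 * sj j) (a j * z))"])
      show "isLin d (2*k1) (\<lambda>z. frob T (a j * frob (sj j) z))"
        unfolding t1[OF j] by (rule isLin_term) simp
      show "isLin d (2*k1) (\<lambda>z. frob T (frob (m1 * sj j) (a j * z)))"
        unfolding t2[OF j] by (rule isLin_term) (use jk in simp)
    qed
  qed simp
  ultimately show ?thesis unfolding eq by (rule isLin_add)
qed

lemma pi_pow:
  assumes prim: "primitive_elem (\<pi>::'a)"
  shows "\<pi> ^ (2^m - 1) = 1"
proof -
  have p0: "\<pi> \<noteq> 0" using prim by (simp add: primitive_elem_def)
  have e2: "Suc (2^m - 1) = (2::nat)^m" by simp
  have "\<pi> ^ Suc (2^m - 1) = \<pi>" unfolding e2 by (rule fermat[OF card mpos])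
  then have "\<pi> * \<pi> ^ (2^m - 1) = \<pi> * 1" by (simp only: power_Suc mult_1_right)
  then show ?thesis using p0 by (metis mult_left_cancel)
qed

lemma pi_surj:
  assumes prim: "primitive_elem (\<pi>::'a)" and y: "y \<noteq> 0"
  shows "\<exists>i<2^m - 1. y = \<pi> ^ i"
proof -
  obtain i where i: "y = \<pi> ^ i" using prim y by (auto simp: primitive_elem_def)
  have N: "0 < (2::nat)^m - 1" using mpos one_less_power[of "2::nat" m] by simp
  have "\<pi> ^ i = \<pi> ^ (i mod (2^m - 1) + (2^m - 1) * (i div (2^m - 1)))" by simp
  also have "\<dots> = \<pi> ^ (i mod (2^m - 1))" by (simp only: power_add power_mult pi_pow[OF prim]) simp
  finally show ?thesis using i N by (intro exI[of _ "i mod (2^m - 1)"]) simp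
qed

lemma pi_inj:
  assumes prim: "primitive_elem (\<pi>::'a)"
  shows "inj_on (\<lambda>i. \<pi> ^ i) {..<2^m - 1}" and "(\<lambda>i. \<pi> ^ i) ` {..<2^m - 1} = UNIV - {0}"
proof -
  have p0: "\<pi> \<noteq> 0" using prim by (simp add: primitive_elem_def)
  show im: "(\<lambda>i. \<pi> ^ i) ` {..<2^m - 1} = UNIV - {0}"
    using pi_surj[OF prim] p0 by auto
  have "card ((\<lambda>i. \<pi> ^ i) ` {..<2^m - 1}) = card {..<(2::nat)^m - 1}"
    unfolding im using card by (simp add: card_Diff_singleton)
  then show "inj_on (\<lambda>i. \<pi> ^ i) {..<2^m - 1}" by (intro eq_card_imp_inj_on) auto
qed

lemma Kcard:
  assumes prim: "primitive_elem (\<pi>::'a)"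
  shows "card {y::'a. frob e y = y} = 2^e"
proof (rule antisym)
  show "card {y::'a. frob e y = y} \<le> 2^e" by (rule card_fixed[OF card mpos dpos epos])
  let ?K = "{y::'a. frob e y = y}"
  have q1: "1 \<le> (2::nat)^e" by simp
  have "(2::nat)^e - 1 dvd (2^e)^(m div e) - 1" by (rule dvd_pow_minus1[OF q1])
  moreover have "((2::nat)^e)^(m div e) = 2^m" using e_dvd_m by (simp add: power_mult[symmetric])
  ultimately obtain g where g: "(2::nat)^m - 1 = (2^e - 1) * g" by auto
  have gpos: "0 < g" using g mpos one_less_power[of "2::nat" m] by (cases g) auto
  let ?P = "(\<lambda>j. \<pi> ^ (g*j)) ` {..<2^e - 1}"
  have lt: "g * j < 2^m - 1" if "j < 2^e - 1" for j
    using that gpos g by (simp add: mult.commute)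
  have inj: "inj_on (\<lambda>j. \<pi> ^ (g*j)) {..<2^e - 1}"
  proof (rule inj_onI)
    fix i j assume i: "i \<in> {..<(2::nat)^e - 1}" and j: "j \<in> {..<(2::nat)^e - 1}" and eq: "\<pi> ^ (g*i) = \<pi> ^ (g*j)"
    have "g*i = g*j" using inj_onD[OF pi_inj(1)[OF prim] eq] lt i j by auto
    then show "i = j" using gpos by simp
  qed
  have PK: "?P \<subseteq> ?K - {0}"
  proof
    fix y assume "y \<in> ?P"
    then obtain j where y: "y = \<pi> ^ (g*j)" by auto
    have p0: "\<pi> \<noteq> 0" using prim by (simp add: primitive_elem_def)
    have gj: "g*j*(2^e-1) = (2^m-1)*j" using g by (simp add: mult.commute mult.left_commute)
    have "y ^ (2^e - 1) = \<pi> ^ (g*j*(2^e-1))" by (simp add: y power_mult)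
    also have "\<dots> = (\<pi> ^ (2^m - 1)) ^ j" by (simp only: gj power_mult)
    finally have "y ^ (2^e - 1) = (\<pi> ^ (2^m - 1)) ^ j" .
    then have y1: "y ^ (2^e - 1) = 1" using pi_pow[OF prim] by (metis power_one)
    have "frob e y = y * y ^ (2^e - 1)" unfolding frob_def
      by (metis Suc_diff_1 pos2 power_Suc zero_less_power)
    then show "y \<in> ?K - {0}" using y1 p0 y by simp
  qed
  have "0 \<notin> ?P" using PK by blast
  then have "card (insert 0 ?P) = Suc (2^e - 1)" using card_image[OF inj] by simp
  also have "\<dots> = 2^e" by simp
  finally have "card (insert 0 ?P) = 2^e" .
  moreover have "insert 0 ?P \<subseteq> ?K" using PK by auto
  ultimately show "2^e \<le> card ?K" by (metis card_mono finite)
qed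

lemma trace_roots:
  assumes "0 < s" "0 < M"
  shows "card {y::'a. trace (s*M) s y = 0} \<le> 2^(s*(M-1))"
proof -
  let ?S = "(\<lambda>i. (2::nat)^(s*i)) ` {..<M}"
  have inj: "inj_on (\<lambda>i. (2::nat)^(s*i)) {..<M}"
    using assms by (auto simp: inj_on_def)
  have eq: "trace (s*M) s y = (\<Sum>t\<in>?S. y^t)" for y :: 'a
    using assms by (simp add: trace_def sum.reindex[OF inj])
  have "Max ?S = 2^(s*(M-1))"
  proof (rule Max_eqI)
    show "finite ?S" by simp
    show "t \<le> 2^(s*(M-1))" if "t \<in> ?S" for t
      using that by (auto intro!: power_increasing)
    show "2^(s*(M-1)) \<in> ?S" using assms by auto
  qed
  moreover have "card {y::'a. (\<Sum>t\<in>?S. y^t) = 0} \<le> Max ?S"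
    by (rule roots_bound) (use assms in auto)
  ultimately show ?thesis by (simp add: eq)
qed

lemma exists_mu:
  assumes prim: "primitive_elem (\<pi>::'a)"
  shows "\<exists>\<mu>::'a. frob e \<mu> = \<mu> \<and> trace e 1 \<mu> \<noteq> 0"
proof (rule ccontr)
  assume "\<not> ?thesis"
  then have "{y::'a. frob e y = y} \<subseteq> {y. trace (1*e) 1 y = 0}" by auto
  then have "card {y::'a. frob e y = y} \<le> card {y::'a. trace (1*e) 1 y = 0}" by (intro card_mono) auto
  also have "\<dots> \<le> 2^(1*(e-1))" by (rule trace_roots) (use epos in auto)
  finally show False using Kcard[OF prim] epos by simp
qed

lemma exists_tr: "\<exists>y::'a. trace m e y \<noteq> 0"
proof (rule ccontr)
  assume "\<not> ?thesis"
  then have "UNIV = {y::'a. trace (e*(2*r)) e y = 0}" using mer by (auto simp: mult.commute mult.left_commute)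
  then have "card (UNIV::'a set) \<le> 2^(e*(2*r-1))"
    using trace_roots[OF epos, of "2*r"] rpos kpos by simp
  then have "(2::nat)^(e*(2*r)) \<le> 2^(e*(2*r-1))" using card mer by (simp add: mult.commute mult.left_commute)
  moreover have "e*(2*r-1) < e*(2*r)" using epos rpos kpos by simp
  ultimately show False by (simp add: power_le_imp_le_exp)
qed

definition Wq where "Wq = {z. \<forall>x. Bq x z = 0}"

lemma Wr_eq:
  assumes prim: "primitive_elem (\<pi>::'a)"
  shows "{z. \<forall>x. trace e 1 (Bq x z) = 0} = Wq"
proof
  show "Wq \<subseteq> {z. \<forall>x. trace e 1 (Bq x z) = 0}" by (auto simp: Wq_def t0z)
  show "{z. \<forall>x. trace e 1 (Bq x z) = 0} \<subseteq> Wq"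
  proof
    fix z assume z: "z \<in> {z. \<forall>x. trace e 1 (Bq x z) = 0}"
    obtain \<mu> :: 'a where mu: "frob e \<mu> = \<mu>" "trace e 1 \<mu> \<noteq> 0" using exists_mu[OF prim] by blast
    have "Bq x z = 0" for x
    proof (rule ccontr)
      assume c: "Bq x z \<noteq> 0"
      define l where "l = \<mu> / Bq x z"
      have fl: "frob e l = l" using mu(1) BK[of x z] by (simp add: l_def divide_inverse frob_mult frob_inverse)
      have "Bq (l * x) z = l * Bq x z" using Bscal[OF fl, of z x] Bsym by metis
      also have "\<dots> = \<mu>" using c by (simp add: l_def)
      finally have "trace e 1 (Bq (l*x) z) \<noteq> 0" using mu(2) by simp
      then show False using z by auto
    qed
    then show "z \<in> Wq" by (simp add: Wq_def)
  qed
qed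

lemma Wq_bound:
  assumes "Wq \<noteq> UNIV"
  shows "card Wq \<le> 2^(e*(2*k1))"
proof -
  obtain y0 :: 'a where y0: "trace m e y0 \<noteq> 0" using exists_tr by blast
  have sub1: "Wq \<subseteq> {z. L z = 0}"
  proof
    fix z assume z: "z \<in> Wq"
    show "z \<in> {z. L z = 0}"
    proof (rule ccontr)
      assume "z \<notin> {z. L z = 0}"
      then have "L z \<noteq> 0" by simp
      then have "Bq (y0 / L z) z = trace m e y0" by (simp add: Bq_def)
      then show False using z y0 by (simp add: Wq_def)
    qed
  qed
  obtain c where c: "\<And>z. frob T (L z) = linp d c (2*k1) z" using rep unfolding isLin_def by blast
  have eqs: "{z. L z = 0} = {z. linp d c (2*k1) z = 0}" using c by (metis frob_eq_0_iff)
  obtain z0 where "z0 \<notin> Wq" using assms by blast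
  then obtain x where "Bq x z0 \<noteq> 0" by (auto simp: Wq_def)
  then have "L z0 \<noteq> 0" by (auto simp: Bq_def t0z)
  then have nz: "\<exists>z. linp d c (2*k1) z \<noteq> 0" using c by (metis frob_eq_0_iff)
  have "card Wq \<le> card {z. L z = 0}" using sub1 by (intro card_mono) auto
  also have "\<dots> \<le> 2^(gcd m d * (2*k1))" unfolding eqs using lin_roots[OF card mpos dpos] nz by blast
  finally show ?thesis using egcd2 by simp
qed

lemma main:
  assumes prim: "primitive_elem (\<pi>::'a)"
    and ctrue: "\<exists>i<2^m-1. trace e 1 (Q (inverse \<pi> ^ i)) = 1"
  shows "(\<Sum>i<2^m-1. sg (trace e 1 (Q (inverse \<pi> ^ i)))) \<in>
      {-1} \<union> {-1 + s * 2 ^ (m div 2 + j * e) | s j. s \<in> {1, -1} \<and> j < k}"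
proof -
  define h where "h x = trace e 1 (Q x)" for x
  define \<beta> where "\<beta> x z = trace e 1 (Bq x z)" for x z
  define K where "K = {y::'a. frob e y = y}"
  have t1add: "trace e 1 (u + v) = trace e 1 u + trace e 1 (v::'a)" for u v by (rule tadd)
  have hbit: "h x = 0 \<or> h x = 1" for x unfolding h_def by (rule bit01[OF QK])
  have bbit: "\<beta> x z = 0 \<or> \<beta> x z = 1" for x z unfolding \<beta>_def by (rule bit01[OF BK])
  have Qadd: "Q (x+z) = Q x + Q z + Bq x z" for x z
  proof -
    have "(Q (x+z) + Q x + Q z) + Q x + Q z = Q (x+z) + 2 * Q x + 2 * Q z" by algebra
    then have "Q (x+z) = (Q (x+z) + Q x + Q z) + Q x + Q z" using two_zero[OF card mpos] by simp
    then have "Q (x+z) = Bq x z + Q x + Q z" by (simp only: Bq_formula)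
    then show ?thesis by (simp only: ac_simps)
  qed
  have hadd: "h (x + z) = h x + h z + \<beta> x z" for x z
    unfolding h_def \<beta>_def Qadd by (simp only: t1add)
  have badd: "\<beta> (x + y) z = \<beta> x z + \<beta> y z" for x y z
    unfolding \<beta>_def by (metis Badd Bsym t1add)
  have bsym: "\<beta> x z = \<beta> z x" for x z unfolding \<beta>_def using Bsym by metis
  note CS = char_sum[OF card mpos hbit bbit hadd badd bsym]
  let ?S = "\<Sum>x\<in>UNIV. sg (h x)"
  have bij: "bij_betw (\<lambda>i. inverse \<pi> ^ i) {..<2^m - 1} (UNIV - {0})"
  proof -
    have "bij_betw (\<lambda>i. \<pi> ^ i) {..<2^m - 1} (UNIV - {0})"
      using pi_inj[OF prim] by (simp add: bij_betw_def)
    moreover have "bij_betw inverse (UNIV - {0::'a}) (UNIV - {0})"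
    proof -
      have "inj_on inverse (UNIV - {0::'a})" by (rule inj_onI) simp
      moreover have "inverse ` (UNIV - {0::'a}) = UNIV - {0}"
      proof (intro equalityI subsetI)
        fix y :: 'a assume "y \<in> inverse ` (UNIV - {0})" then show "y \<in> UNIV - {0}" by auto
      next
        fix y :: 'a assume "y \<in> UNIV - {0}"
        then show "y \<in> inverse ` (UNIV - {0})" by (intro image_eqI[of _ _ "inverse y"]) auto
      qed
      ultimately show ?thesis by (simp add: bij_betw_def)
    qed
    ultimately have "bij_betw (inverse \<circ> (\<lambda>i. \<pi> ^ i)) {..<2^m - 1} (UNIV - {0})"
      by (rule bij_betw_trans)
    then show ?thesis by (simp add: comp_def power_inverse)
  qed
  have D: "(\<Sum>i<2^m-1. sg (h (inverse \<pi> ^ i))) = ?S - 1"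
  proof -
    have "(\<Sum>i<2^m-1. sg (h (inverse \<pi> ^ i))) = (\<Sum>y\<in>UNIV - {0}. sg (h y))"
      by (rule sum.reindex_bij_betw[OF bij])
    moreover have "?S = sg (h 0) + (\<Sum>y\<in>UNIV - {0}. sg (h y))" by (simp add: sum.remove)
    moreover have "sg (h 0) = 1" by (simp add: h_def Q0 t0z sg_def)
    ultimately show ?thesis by simp
  qed
  obtain i0 where i0: "h (inverse \<pi> ^ i0) = 1" using ctrue by (auto simp: h_def)
  show ?thesis
  proof (cases "?S = 0")
    case True
    then show ?thesis using D by (simp add: h_def)
  next
    case False
    then have S2: "?S^2 = 2^m * int (card (Wr \<beta>))" and W1: "\<forall>z\<in>Wr \<beta>. sg (h z) = 1" using CS by auto
    have WW: "Wr \<beta> = Wq"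
    proof -
      have "Wr \<beta> = {z. \<forall>x. \<beta> x z = 0}" by (rule Wr_def[OF card mpos hbit bbit hadd badd bsym])
      also have "\<dots> = Wq" using Wr_eq[OF prim] by (simp add: \<beta>_def)
      finally show ?thesis .
    qed
    have WU: "Wq \<noteq> UNIV"
    proof
      assume "Wq = UNIV"
      then have "sg (h (inverse \<pi> ^ i0)) = 1" using W1 WW by auto
      then show False using i0 by (simp add: sg_def)
    qed
    have Wb: "card Wq \<le> 2^(e*(2*k1))" by (rule Wq_bound[OF WU])
    have Kin: "inverse x \<in> K" if "x \<in> K" for x using that by (simp add: K_def frob_inverse)
    have BqK: "Bq x z \<in> K" for x z using BK by (simp add: K_def)
    have Bsc: "a' \<in> K \<Longrightarrow> Bq x (a' * z) = a' * Bq x z" for a' x z using Bscal by (simp add: K_def)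
    note SY = symp[OF card mpos Badd Bsc Bsym Balt BqK Kin]
    have "sub K UNIV" using sub_def[OF card mpos Badd Bsc Bsym Balt BqK Kin, of UNIV] by simp
    then obtain s where s: "card (UNIV::'a set) = card (rad Bq UNIV) * card K ^ (2*s)" using SY by blast
    have "rad Bq UNIV = Wq" using rad_def[OF card mpos Badd Bsc Bsym Balt BqK Kin, of UNIV] by (simp add: Wq_def)
    moreover have "card K = 2^e" unfolding K_def by (rule Kcard[OF prim])
    moreover have p: "((2::nat)^e)^(2*s) = 2^(2*e*s)"
      by (simp only: power_mult[symmetric]) (simp only: mult.assoc mult.commute mult.left_commute)
    ultimately have eq: "(2::nat)^m = card Wq * 2^(2*e*s)" using s card by simp
    have cW: "1 \<le> card Wq"
    proof -
      have "L 0 = 0" using L_scal[of 0 0] by simp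
      then have "0 \<in> Wq" by (simp add: Wq_def Bq_def t0z)
      then have "Wq \<noteq> {}" by blast
      then show ?thesis by (simp add: card_gt_0_iff Suc_le_eq)
    qed
    have le: "2*e*s \<le> m"
    proof (rule ccontr)
      assume "\<not> 2*e*s \<le> m"
      then have "(2::nat)^m < 2^(2*e*s)" by simp
      also have "\<dots> \<le> card Wq * 2^(2*e*s)" using cW by simp
      finally show False using eq by simp
    qed
    have "(2::nat)^m = 2^(m - 2*e*s) * 2^(2*e*s)" using le by (simp add: power_add[symmetric])
    then have cWq: "card Wq = 2^(m - 2*e*s)" using eq by simp
    define j where "j = r - s"
    have "2*e*j = 2*e*r - 2*e*s" by (simp only: j_def diff_mult_distrib2)
    then have mj: "m - 2*e*s = 2*e*j" using mer by simp
    have "(2::nat)^(2*e*j) \<le> 2^(e*(2*k1))" using Wb cWq mj by simp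
    then have "2*e*j \<le> e*(2*k1)" by (simp add: power_le_imp_le_exp)
    then have jk: "j < k" using epos kpos by (simp add: k1_def)
    have "?S^2 = 2^m * 2^(2*e*j)" using S2 cWq mj WW by simp
    also have "\<dots> = (2::int)^(m + 2*e*j)" by (simp only: power_add)
    also have "m + 2*e*j = (n + j*e)*2" using m2n by simp
    also have "(2::int)^((n + j*e)*2) = (2^(n + j*e))^2" by (rule power_mult)
    finally have "?S = 2^(n + j*e) \<or> ?S = - (2^(n + j*e))" by (simp add: power2_eq_iff)
    moreover have md: "m div 2 = n" using m2n by simp
    ultimately obtain sg0 :: int where sg0: "sg0 \<in> {1, -1}" "?S - 1 = -1 + sg0 * 2 ^ (m div 2 + j * e)"
      by (metis insertCI mult_1 mult_minus1 uminus_add_conv_diff add.commute diff_conv_add_uminus)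
    then have "?S - 1 \<in> {-1 + s * 2 ^ (m div 2 + j * e) | s j. s \<in> {1, -1} \<and> j < k}"
      using jk by blast
    then show ?thesis using D by (simp add: h_def)
  qed
qed

end

theorem theorem1p1:
  fixes m n d e k :: nat and \<pi> :: "'a::{field,finite}" and c :: "bool list"
  assumes "m > 0" "n > 0" "d > 0" "e > 0" "k > 0"
    and "m = 2 * n" and "e = gcd n d" and "e = gcd m d"
    and "1 \<le> k" and "k \<le> n div e"
    and "card (UNIV :: 'a set) = 2 ^ m"
    and "primitive_elem \<pi>"
    and "c \<in> code m n d e k \<pi>"
    and "True \<in> set c"
  shows "DC c \<in> {-1} \<union> {-1 + s * 2 ^ (m div 2 + j * e) | s j. s \<in> {1, -1} \<and> j < k}"
proof -
  obtain a0 a where a0: "a0 ^ (2^n) = a0" and c: "c = codeword m n d e k \<pi> a0 a"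
    using assms(13) by (auto simp: code_def)
  have a0n: "frob n a0 = a0" using a0 by (simp add: frob_def)
  note M = main[OF assms(11) assms(2) assms(3) assms(4) assms(9) assms(6) assms(7) assms(8) assms(10) a0n assms(12)]
  let ?f = "\<lambda>i. trace e 1 (Qf m n d e k a0 a (inverse \<pi> ^ i))"
  have Qeq: "Q m n d e k a0 a x = Qf m n d e k a0 a x" for x
    by (rule Q_def[OF assms(11) assms(2) assms(3) assms(4) assms(9) assms(6) assms(7) assms(8) assms(10) a0n])
  have ct: "\<exists>i<2^m-1. trace e 1 (Q m n d e k a0 a (inverse \<pi> ^ i)) = 1"
    using assms(14) by (auto simp: c codeword_def Qeq)
  have "DC c = (\<Sum>i<2^m-1. sg (?f i))"
  proof -
    have "DC c = sum_list (map (\<lambda>i. sg (?f i)) [0..<2^m-1])"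
      by (simp add: DC_def c codeword_def comp_def sg_def)
    also have "\<dots> = (\<Sum>i<2^m-1. sg (?f i))"
      by (simp add: interv_sum_list_conv_sum_set_nat atLeast0LessThan)
    finally show ?thesis .
  qed
  then show ?thesis using M[OF ct] by (simp add: Qeq)
qed

end
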